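(* Let $K\ge2$, $s\in(0,1)$, $q_1\ge\cdots\ge q_K>0$ with $\sum_{i=1}^Kq_i+s=1$. Let $\alpha_i=\log_{q_1}q_i$, let $R_0>1$ be the unique positive root of $\sum_{i=1}^KX^{-\alpha_i}=1$, let $-\beta=\log q_1/\log R_0$, and let $\overline{\mu}_K=\frac1K\sum_{i=1}^K\log_Kq_i$. Then $\overline{\mu}_K\le-\beta$, with equality when $q_1=\cdots=q_K$.
   Context: $-\beta$ is the exponent of the power law $B_r\approx r^{-\beta}$ for ranked word base values in the monkey-at-the-typewriter model with letter probabilities $q_i$ and space probability $s$. $\log_K$ denotes logarithm to base $K$. *)

theory Defs
  imports Complex_Main
begin

definition alpha :: "(nat \<Rightarrow> real) \<Rightarrow> nat \<Rightarrow> real" where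
  "alpha q i = log (q 1) (q i)"

definition mu_bar :: "nat \<Rightarrow> (nat \<Rightarrow> real) \<Rightarrow> real" where
  "mu_bar K q = (1 / real K) * (\<Sum>i=1..K. log (real K) (q i))"

definition neg_beta :: "(nat \<Rightarrow> real) \<Rightarrow> real \<Rightarrow> real" where
  "neg_beta q R0 = ln (q 1) / ln R0"

end

theory Submission
  imports Defs
begin

theorem proposition1:
  fixes K :: nat and s R0 :: real and q :: "nat \<Rightarrow> real"
  assumes hK: "K \<ge> 2"
    and hs: "0 < s" "s < 1"
    and hmono: "\<And>i j. 1 \<le> i \<Longrightarrow> i \<le> j \<Longrightarrow> j \<le> K \<Longrightarrow> q j \<le> q i"
    and hpos: "\<And>i. 1 \<le> i \<Longrightarrow> i \<le> K \<Longrightarrow> q i > 0"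
    and hsum: "(\<Sum>i=1..K. q i) + s = 1"
    and hR0: "R0 > 1"
    and hroot: "(\<Sum>i=1..K. R0 powr (- alpha q i)) = 1"
    and huniq: "\<And>X. X > 0 \<Longrightarrow> (\<Sum>i=1..K. X powr (- alpha q i)) = 1 \<Longrightarrow> X = R0"
  shows "mu_bar K q \<le> neg_beta q R0
         \<and> ((\<forall>i\<in>{1..K}. q i = q 1) \<longrightarrow> mu_bar K q = neg_beta q R0)"
proof -
  define L where "L = ln R0"
  define a where "a = ln (q 1)"
  define t where "t = - L / a"
  have L: "L > 0" using hR0 by (simp add: L_def)
  have q1pos: "q 1 > 0" using hpos hK by simp
  have "q 1 \<le> (\<Sum>i=1..K. q i)"
    using hK hpos by (intro member_le_sum) (auto intro: less_imp_le)
  hence q1lt: "q 1 < 1" using hsum hs by linarith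
  have a: "a < 0" using q1pos q1lt by (simp add: a_def)
  have t: "t > 0" using L a by (simp add: t_def divide_pos_neg)
  have e: "R0 powr (- alpha q i) = exp (t * ln (q i))" for i
    using hR0 a L by (simp add: powr_def alpha_def log_def t_def a_def L_def field_simps)
  have s1: "(\<Sum>i=1..K. exp (t * ln (q i))) = 1" using hroot e by simp
  have Kpos: "real K > 0" using hK by simp
  have lnK: "ln (real K) > 0" using hK by simp
  have ineq: "real K * exp (t * ln (q i)) \<ge> 1 + t * ln (q i) + ln (real K)" for i
  proof -
    have "real K * exp (t * ln (q i)) = exp (t * ln (q i) + ln (real K))"
      using Kpos by (simp add: exp_add)
    thus ?thesis using exp_ge_add_one_self[of "t * ln (q i) + ln (real K)"] by linarith
  qed
  have "(\<Sum>i=1..K. 1 + t * ln (q i) + ln (real K)) \<le> (\<Sum>i=1..K. real K * exp (t * ln (q i)))"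
    by (intro sum_mono ineq)
  also have "\<dots> = real K" using s1 by (simp add: sum_distrib_left[symmetric])
  finally have "real K + t * (\<Sum>i=1..K. ln (q i)) + real K * ln (real K) \<le> real K"
    by (simp add: sum.distrib sum_distrib_left)
  hence S: "t * (\<Sum>i=1..K. ln (q i)) \<le> - real K * ln (real K)" by linarith
  have nb: "neg_beta q R0 = - 1 / t"
    using L a by (simp add: neg_beta_def t_def a_def L_def field_simps)
  have mu: "mu_bar K q = (\<Sum>i=1..K. ln (q i)) / (real K * ln (real K))"
    by (simp add: mu_bar_def log_def sum_divide_distrib[symmetric])
  have part1: "mu_bar K q \<le> neg_beta q R0"
  proof -
    define P where "P = real K * ln (real K)"
    define S where "S = (\<Sum>i=1..K. ln (q i))"
    have P: "P > 0" using Kpos lnK by (simp add: P_def)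
    have "t * S \<le> - P" using S by (simp add: S_def P_def)
    hence "S \<le> (- P) / t" using t by (subst pos_le_divide_eq) (auto simp: mult.commute)
    hence "S / P \<le> - 1 / t" using P t by (simp add: divide_le_eq)
    thus ?thesis unfolding mu nb by (simp add: S_def P_def)
  qed
  have part2: "mu_bar K q = neg_beta q R0" if all: "\<forall>i\<in>{1..K}. q i = q 1"
  proof -
    have li: "ln (q i) = a" if "i \<in> {1..K}" for i
      using bspec[OF all that] unfolding a_def by (rule arg_cong)
    have "(\<Sum>i=1..K. exp (t * ln (q i))) = (\<Sum>i=1..K. exp (t * a))"
      using li by (intro sum.cong) auto
    also have "\<dots> = real K * exp (t * a)" by simp
    finally have "real K * exp (t * a) = 1" using s1 by simp
    hence "exp (t * a) = 1 / real K" using Kpos by (simp add: eq_divide_eq mult.commute)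
    hence "t * a = ln (1 / real K)" by (metis ln_exp)
    hence ta: "t * a = - ln (real K)" using Kpos by (simp add: ln_div)
    have "(\<Sum>i=1..K. ln (q i)) = (\<Sum>i=1..K. a)"
      using li by (intro sum.cong) auto
    hence Sa: "(\<Sum>i=1..K. ln (q i)) = real K * a" by simp
    have "mu_bar K q = a / ln (real K)" unfolding mu Sa using Kpos by simp
    also have "\<dots> = -1 / t"
    proof -
      have "a = (t * a) / t" using t by simp
      hence "a = - ln (real K) / t" using ta by simp
      thus ?thesis using lnK t by simp
    qed
    finally show ?thesis using nb by simp
  qed
  show ?thesis using part1 part2 by blast
qed

end
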